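(* Let $x_1,\dots,x_{N+1}$ be i.i.d. uniform on $\mathbb S^{d-1}$ and $x_{i^*}$ the element of $\{x_1,\dots,x_N\}$ maximizing $x_i^\top x_{N+1}$. There is an absolute constant $c>0$ such that if $N\ge c\sqrt d\log d$, then $\mathbb E[x_{i^*}^\top x_{N+1}]\ge\frac{2}{(N+1)^2}$.
   Context: $\mathbb S^{d-1}$ is the unit sphere in $\mathbb R^d$; equivalently $i^*=\arg\min_{i\in[N]}\|x_i-x_{N+1}\|_2$. *)

theory Defs
  imports "HOL-Probability.Probability"
begin

text \<open>Euclidean space R^d, vectors as extensional functions on {..<d}, with Lebesgue measure.\<close>
definition euclid_space :: "nat \<Rightarrow> (nat \<Rightarrow> real) measure" where
  "euclid_space d = PiM {..<d} (\<lambda>_. lborel)"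

definition sq_norm_d :: "nat \<Rightarrow> (nat \<Rightarrow> real) \<Rightarrow> real" where
  "sq_norm_d d x = (\<Sum>i<d. (x i)^2)"

definition unit_ball_d :: "nat \<Rightarrow> (nat \<Rightarrow> real) set" where
  "unit_ball_d d = {x \<in> space (euclid_space d). sq_norm_d d x \<le> 1}"

definition sph_normalize :: "nat \<Rightarrow> (nat \<Rightarrow> real) \<Rightarrow> (nat \<Rightarrow> real)" where
  "sph_normalize d x = (\<lambda>i. if i < d then x i / sqrt (sq_norm_d d x) else undefined)"

text \<open>Uniform (normalized surface = cone) probability measure on the unit sphere S^{d-1}:
  radial projection of the uniform distribution on the unit ball.\<close>
definition uniform_sphere :: "nat \<Rightarrow> (nat \<Rightarrow> real) measure" where
  "uniform_sphere d =
     distr (uniform_measure (euclid_space d) (unit_ball_d d)) (euclid_space d) (sph_normalize d)"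

end

theory Submission imports Defs begin

interpretation lbpi: product_sigma_finite "\<lambda>_::nat. lborel" by standard

lemma space_euclid: "space (euclid_space d) = PiE {..<d} (\<lambda>_. UNIV)"
  by (simp add: euclid_space_def space_PiM)

lemma sets_euclid: "sets (euclid_space d) = sets (PiM {..<d} (\<lambda>_. lborel))"
  by (simp add: euclid_space_def)

lemma meas_comp[measurable]: "k < d \<Longrightarrow> (\<lambda>x. x k) \<in> borel_measurable (euclid_space d)"
  using measurable_component_singleton[of k "{..<d}" "\<lambda>_. lborel"]
  unfolding euclid_space_def by (simp add: measurable_lborel2)

lemma meas_sq_norm[measurable]: "sq_norm_d d \<in> borel_measurable (euclid_space d)"
  unfolding sq_norm_d_def by measurable

lemma ball_sets[measurable]: "unit_ball_d d \<in> sets (euclid_space d)"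
  unfolding unit_ball_d_def by measurable

lemma ball_fin: "emeasure (euclid_space d) (unit_ball_d d) < \<infinity>"
proof -
  have "unit_ball_d d \<subseteq> PiE {..<d} (\<lambda>_. {-1..1::real})"
  proof
    fix x assume x: "x \<in> unit_ball_d d"
    show "x \<in> PiE {..<d} (\<lambda>_. {-1..1::real})"
    proof -
      { fix i assume i: "i < d"
        have "(x i)^2 \<le> sq_norm_d d x" unfolding sq_norm_d_def
          using i by (intro member_le_sum) auto
        also have "\<dots> \<le> 1" using x by (simp add: unit_ball_d_def)
        finally have "\<bar>x i\<bar> \<le> 1" by (simp add: abs_square_le_1)
        hence "x i \<in> {-1..1}" by auto }
      thus ?thesis using x by (auto simp: unit_ball_d_def space_euclid PiE_iff)
    qed
  qed
  hence "emeasure (euclid_space d) (unit_ball_d d) \<le> emeasure (euclid_space d) (PiE {..<d} (\<lambda>_. {-1..1::real}))"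
    by (intro emeasure_mono) (auto simp: euclid_space_def)
  also have "\<dots> = (\<Prod>i<d. emeasure lborel {-1..1::real})"
    unfolding euclid_space_def by (subst lbpi.emeasure_PiM) auto
  also have "\<dots> < \<infinity>" by (simp add: ennreal_prod_eq_top less_top[symmetric] power_eq_top_ennreal)
  finally show ?thesis .
qed

lemma ball_pos: assumes "d \<ge> 1" shows "emeasure (euclid_space d) (unit_ball_d d) \<noteq> 0"
proof -
  let ?r = "1 / real d"
  have "PiE {..<d} (\<lambda>_. {-?r..?r}) \<subseteq> unit_ball_d d"
  proof
    fix x assume x: "x \<in> PiE {..<d} (\<lambda>_. {-?r..?r})"
    have "sq_norm_d d x \<le> (\<Sum>i<d. ?r^2)" unfolding sq_norm_d_def
    proof (intro sum_mono)
      fix i assume "i \<in> {..<d}"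
      with x have "x i \<in> {-?r..?r}" by (auto simp: PiE_iff)
      hence "\<bar>x i\<bar> \<le> ?r" by (simp add: abs_le_iff)
      thus "(x i)^2 \<le> ?r^2" by (metis abs_ge_zero power2_abs power_mono)
    qed
    also have "\<dots> = 1 / real d" using assms by (simp add: power2_eq_square)
    also have "\<dots> \<le> 1" using assms by simp
    finally show "x \<in> unit_ball_d d" using x by (auto simp: unit_ball_d_def space_euclid PiE_iff)
  qed
  hence "emeasure (euclid_space d) (PiE {..<d} (\<lambda>_. {-?r..?r})) \<le> emeasure (euclid_space d) (unit_ball_d d)"
    by (intro emeasure_mono) auto
  moreover have "emeasure (euclid_space d) (PiE {..<d} (\<lambda>_. {-?r..?r})) = (\<Prod>i<d. emeasure lborel {-?r..?r})"
    unfolding euclid_space_def by (subst lbpi.emeasure_PiM) auto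
  moreover have "(\<Prod>i<d. emeasure lborel {-?r..?r}) \<noteq> 0" using assms
    by (simp add: prod_zero_iff)
  ultimately show ?thesis by (metis le_zero_eq)
qed


lemma sph_eq: "sph_normalize d = (\<lambda>x. \<lambda>i\<in>{..<d}. x i / sqrt (sq_norm_d d x))"
  by (auto simp: sph_normalize_def restrict_def fun_eq_iff)

lemma sph_meas[measurable]: "sph_normalize d \<in> measurable (euclid_space d) (euclid_space d)"
proof -
  have "(\<lambda>x. \<lambda>i\<in>{..<d}. x i / sqrt (sq_norm_d d x)) \<in> measurable (euclid_space d) (PiM {..<d} (\<lambda>_. lborel))"
  proof (rule measurable_restrict)
    fix i assume "i \<in> {..<d}"
    hence "(\<lambda>x. x i / sqrt (sq_norm_d d x)) \<in> borel_measurable (euclid_space d)"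
      by (intro borel_measurable_divide borel_measurable_sqrt meas_comp meas_sq_norm) auto
    thus "(\<lambda>x. x i / sqrt (sq_norm_d d x)) \<in> measurable (euclid_space d) lborel"
      by (simp add: measurable_lborel2)
  qed
  thus ?thesis unfolding sph_eq by (simp add: euclid_space_def)
qed

definition U where "U d = uniform_measure (euclid_space d) (unit_ball_d d)"

lemma sets_U[simp, measurable_cong]: "sets (U d) = sets (euclid_space d)"
  by (simp add: U_def)
lemma space_U[simp]: "space (U d) = space (euclid_space d)"
  by (simp add: U_def)

lemma sph_meas_U[measurable]: "sph_normalize d \<in> measurable (U d) (euclid_space d)"
  using sph_meas measurable_cong_sets[OF sets_U refl] by blast

lemma us_U: "uniform_sphere d = distr (U d) (euclid_space d) (sph_normalize d)"
  by (simp add: uniform_sphere_def U_def)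

lemma prob_U: "d \<ge> 1 \<Longrightarrow> prob_space (U d)"
  unfolding U_def using ball_pos[of d] ball_fin[of d] by (intro prob_space_uniform_measure) auto

lemma prob_mu: "d \<ge> 1 \<Longrightarrow> prob_space (uniform_sphere d)"
  unfolding us_U by (intro prob_space.prob_space_distr prob_U sph_meas_U)

lemma space_mu[simp]: "space (uniform_sphere d) = space (euclid_space d)"
  by (simp add: us_U)
lemma sets_mu[simp, measurable_cong]: "sets (uniform_sphere d) = sets (euclid_space d)"
  by (simp add: us_U)

lemma sq_norm_nonneg: "sq_norm_d d x \<ge> 0"
  unfolding sq_norm_d_def by (intro sum_nonneg) auto

lemma sq_norm_sph: "sq_norm_d d x \<noteq> 0 \<Longrightarrow> sq_norm_d d (sph_normalize d x) = 1"
proof -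
  assume h: "sq_norm_d d x \<noteq> 0"
  have "sq_norm_d d (sph_normalize d x) = (\<Sum>i<d. (x i)^2 / sq_norm_d d x)"
    unfolding sq_norm_d_def[of d "sph_normalize d x"] unfolding sph_normalize_def using sq_norm_nonneg[of d x]
    by (intro sum.cong) (auto simp: power_divide)
  also have "\<dots> = sq_norm_d d x / sq_norm_d d x"
    by (simp add: sum_divide_distrib[symmetric] sq_norm_d_def)
  finally show ?thesis using h by simp
qed

lemma AE_nonzero: assumes "d \<ge> 1" shows "AE x in euclid_space d. sq_norm_d d x \<noteq> 0"
proof (rule AE_I')
  let ?N = "PiE {..<d} (\<lambda>i. if i = 0 then {0} else (UNIV::real set))"
  have "emeasure (euclid_space d) ?N = (\<Prod>i<d. emeasure lborel (if i = 0 then {0} else (UNIV::real set)))"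
    unfolding euclid_space_def by (subst lbpi.emeasure_PiM) auto
  also have "\<dots> = 0" using assms
    by (auto simp: prod_zero_iff intro!: bexI[of _ 0])
  finally show "?N \<in> null_sets (euclid_space d)"
    by (auto simp: null_sets_def euclid_space_def)
  show "{x \<in> space (euclid_space d). \<not> sq_norm_d d x \<noteq> 0} \<subseteq> ?N"
  proof (intro subsetI)
    fix x assume "x \<in> {x \<in> space (euclid_space d). \<not> sq_norm_d d x \<noteq> 0}"
    hence x: "x \<in> space (euclid_space d)" "sq_norm_d d x = 0" by auto
    have "(x 0)^2 \<le> sq_norm_d d x" unfolding sq_norm_d_def
      using assms by (intro member_le_sum) auto
    hence "x 0 = 0" using x by simp
    thus "x \<in> ?N" using x by (auto simp: space_euclid PiE_iff)
  qed
qed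

lemma AE_mu_norm: assumes "d \<ge> 1" shows "AE v in uniform_sphere d. sq_norm_d d v = 1"
proof -
  have "AE x in U d. sq_norm_d d (sph_normalize d x) = 1"
    unfolding U_def
    by (rule AE_uniform_measureI[OF ball_sets]) (use AE_nonzero[OF assms] sq_norm_sph in \<open>auto elim: AE_mp\<close>)
  thus ?thesis unfolding us_U
    by (subst AE_distr_iff) auto
qed


definition negv :: "nat \<Rightarrow> (nat \<Rightarrow> real) \<Rightarrow> (nat \<Rightarrow> real)" where
  "negv d x = (\<lambda>i\<in>{..<d}. - x i)"

lemma negv_meas[measurable]: "negv d \<in> measurable (euclid_space d) (euclid_space d)"
proof -
  have "(\<lambda>x. \<lambda>i\<in>{..<d}. - x i) \<in> measurable (euclid_space d) (PiM {..<d} (\<lambda>_. lborel))"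
  proof (rule measurable_restrict)
    fix i assume "i \<in> {..<d}"
    hence "(\<lambda>x. - x i) \<in> borel_measurable (euclid_space d)"
      by (intro borel_measurable_uminus meas_comp) auto
    thus "(\<lambda>x. - x i) \<in> measurable (euclid_space d) lborel"
      by (simp add: measurable_lborel2)
  qed
  thus ?thesis unfolding negv_def by (simp add: euclid_space_def)
qed

lemma negv_meas_U[measurable]: "negv d \<in> measurable (U d) (euclid_space d)"
  using negv_meas measurable_cong_sets[OF sets_U refl] by blast

lemma negv_meas_mu[measurable]: "negv d \<in> measurable (uniform_sphere d) (euclid_space d)"
  using negv_meas measurable_cong_sets[OF sets_mu refl] by blast

lemma negv_space: "x \<in> space (euclid_space d) \<Longrightarrow> negv d x \<in> space (euclid_space d)"
  by (auto simp: negv_def space_euclid)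

lemma distr_negv: "distr (euclid_space d) (euclid_space d) (negv d) = euclid_space d"
  unfolding euclid_space_def
proof (rule lbpi.PiM_eqI)
  show "sets (distr (Pi\<^sub>M {..<d} (\<lambda>_. lborel)) (Pi\<^sub>M {..<d} (\<lambda>_. lborel)) (negv d)) = sets (Pi\<^sub>M {..<d} (\<lambda>_. lborel))"
    by simp
  fix A :: "nat \<Rightarrow> real set" assume A: "\<And>i. i \<in> {..<d} \<Longrightarrow> A i \<in> sets lborel"
  have eq1: "negv d -` PiE {..<d} A \<inter> space (Pi\<^sub>M {..<d} (\<lambda>_. lborel)) = PiE {..<d} (\<lambda>i. uminus -` A i)"
    by (auto simp: negv_def space_PiM PiE_iff extensional_def)
  have eqm: "emeasure lborel (uminus -` A i) = emeasure lborel (A i)" if "i \<in> {..<d}" for i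
  proof -
    have "emeasure lborel (A i) = emeasure (distr lborel borel uminus) (A i)"
      by (simp add: lborel_distr_uminus)
    also have "\<dots> = emeasure lborel (uminus -` A i)"
      using A[OF that] by (subst emeasure_distr) auto
    finally show ?thesis by simp
  qed
  have pre: "uminus -` A i \<in> sets lborel" if "i \<in> {..<d}" for i
  proof -
    have "(uminus::real\<Rightarrow>real) \<in> measurable borel borel" by simp
    from measurable_sets[OF this, of "A i"] A[OF that] show ?thesis by simp
  qed
  have nm: "negv d \<in> measurable (Pi\<^sub>M {..<d} (\<lambda>_. lborel)) (Pi\<^sub>M {..<d} (\<lambda>_. lborel))"
    using negv_meas[of d] by (simp add: euclid_space_def)
  have "emeasure (distr (Pi\<^sub>M {..<d} (\<lambda>_. lborel)) (Pi\<^sub>M {..<d} (\<lambda>_. lborel)) (negv d)) (Pi\<^sub>E {..<d} A)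
     = emeasure (Pi\<^sub>M {..<d} (\<lambda>_. lborel)) (negv d -` PiE {..<d} A \<inter> space (Pi\<^sub>M {..<d} (\<lambda>_. lborel)))"
    by (rule emeasure_distr[OF nm]) (use A in \<open>auto intro!: sets_PiM_I_finite\<close>)
  also have "\<dots> = emeasure (Pi\<^sub>M {..<d} (\<lambda>_. lborel)) (PiE {..<d} (\<lambda>i. uminus -` A i))"
    by (simp only: eq1)
  also have "\<dots> = (\<Prod>i<d. emeasure lborel (uminus -` A i))"
    by (rule lbpi.emeasure_PiM) (use pre in auto)
  also have "\<dots> = (\<Prod>i<d. emeasure lborel (A i))"
    by (rule prod.cong) (auto simp: eqm)
  finally show "emeasure (distr (Pi\<^sub>M {..<d} (\<lambda>_. lborel)) (Pi\<^sub>M {..<d} (\<lambda>_. lborel)) (negv d)) (Pi\<^sub>E {..<d} A)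
     = (\<Prod>i<d. emeasure lborel (A i))" .
qed simp

lemma sq_norm_negv: "sq_norm_d d (negv d x) = sq_norm_d d x"
  by (simp add: sq_norm_d_def negv_def)

lemma distr_negv_U: "distr (U d) (euclid_space d) (negv d) = U d"
proof (rule measure_eqI)
  fix S assume S: "S \<in> sets (distr (U d) (euclid_space d) (negv d))"
  hence S': "S \<in> sets (euclid_space d)" by simp
  have eq: "negv d -` S \<inter> space (euclid_space d) \<inter> unit_ball_d d = negv d -` (S \<inter> unit_ball_d d) \<inter> space (euclid_space d)"
    by (auto simp: unit_ball_d_def sq_norm_negv negv_space)
  have "emeasure (distr (U d) (euclid_space d) (negv d)) S = emeasure (U d) (negv d -` S \<inter> space (euclid_space d))"
    using S' by (subst emeasure_distr) (auto intro: negv_meas_U)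
  also have "\<dots> = emeasure (euclid_space d) (unit_ball_d d \<inter> (negv d -` S \<inter> space (euclid_space d))) / emeasure (euclid_space d) (unit_ball_d d)"
    unfolding U_def using S' by (subst emeasure_uniform_measure) (auto intro: measurable_sets[OF negv_meas])
  also have "unit_ball_d d \<inter> (negv d -` S \<inter> space (euclid_space d)) = negv d -` (S \<inter> unit_ball_d d) \<inter> space (euclid_space d)"
    using eq by blast
  also have "emeasure (euclid_space d) \<dots> = emeasure (distr (euclid_space d) (euclid_space d) (negv d)) (S \<inter> unit_ball_d d)"
    using S' by (subst emeasure_distr) auto
  also have "\<dots> = emeasure (euclid_space d) (S \<inter> unit_ball_d d)"
    by (simp add: distr_negv)
  also have "\<dots> / emeasure (euclid_space d) (unit_ball_d d) = emeasure (U d) S"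
    unfolding U_def using S' by (subst emeasure_uniform_measure) (auto simp: Int_commute)
  finally show "emeasure (distr (U d) (euclid_space d) (negv d)) S = emeasure (U d) S" .
qed simp

lemma distr_negv_mu: "distr (uniform_sphere d) (euclid_space d) (negv d) = uniform_sphere d"
proof -
  have "distr (uniform_sphere d) (euclid_space d) (negv d) = distr (U d) (euclid_space d) (negv d \<circ> sph_normalize d)"
    unfolding us_U by (rule distr_distr) auto
  also have "\<dots> = distr (U d) (euclid_space d) (sph_normalize d \<circ> negv d)"
    by (rule distr_cong) (auto simp: negv_def sph_normalize_def sq_norm_d_def space_euclid fun_eq_iff)
  also have "\<dots> = distr (distr (U d) (euclid_space d) (negv d)) (euclid_space d) (sph_normalize d)"
    by (rule distr_distr[symmetric]) (auto intro: negv_meas_U)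
  also have "\<dots> = uniform_sphere d" by (simp add: distr_negv_U us_U)
  finally show ?thesis .
qed

lemma mean_zero: assumes "k < d" shows "(\<integral>v. v k \<partial>uniform_sphere d) = 0"
proof -
  have "(\<integral>v. v k \<partial>uniform_sphere d) = (\<integral>v. v k \<partial>distr (uniform_sphere d) (euclid_space d) (negv d))"
    by (simp add: distr_negv_mu)
  also have "\<dots> = (\<integral>v. negv d v k \<partial>uniform_sphere d)"
    using assms by (subst integral_distr) (auto intro: negv_meas_mu)
  also have "\<dots> = (\<integral>v. - v k \<partial>uniform_sphere d)"
    using assms by (simp add: negv_def)
  finally show ?thesis by simp
qed


lemma meas_comp_mu[measurable]: "k < d \<Longrightarrow> (\<lambda>x. x k) \<in> borel_measurable (uniform_sphere d)"
  using meas_comp measurable_cong_sets[OF sets_mu refl] by blast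

lemma integrable_bdd:
  fixes f :: "(nat \<Rightarrow> real) \<Rightarrow> real" and B :: real
  assumes "d \<ge> 1" "f \<in> borel_measurable (uniform_sphere d)" "AE v in uniform_sphere d. \<bar>f v\<bar> \<le> B"
  shows "integrable (uniform_sphere d) f"
proof -
  interpret prob_space "uniform_sphere d" by (rule prob_mu[OF assms(1)])
  show ?thesis using assms(2,3) by (intro integrable_const_bound[where B=B]) auto
qed

lemma coord_bound: "sq_norm_d d v = 1 \<Longrightarrow> k < d \<Longrightarrow> \<bar>v k\<bar> \<le> 1"
proof -
  assume h: "sq_norm_d d v = 1" "k < d"
  have "(v k)^2 \<le> sq_norm_d d v" unfolding sq_norm_d_def using h(2) by (intro member_le_sum) auto
  with h show ?thesis by (simp add: abs_square_le_1)
qed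

lemma inner_bound:
  assumes "sq_norm_d d u = 1" "sq_norm_d d v = 1"
  shows "\<bar>\<Sum>k<d. u k * v k\<bar> \<le> 1"
proof -
  have "\<bar>\<Sum>k<d. u k * v k\<bar> \<le> (\<Sum>k<d. \<bar>u k * v k\<bar>)" by (rule sum_abs)
  also have "\<dots> \<le> (\<Sum>k<d. ((u k)^2 + (v k)^2) / 2)"
  proof (intro sum_mono)
    fix k
    have "0 \<le> (\<bar>u k\<bar> - \<bar>v k\<bar>)^2" by simp
    thus "\<bar>u k * v k\<bar> \<le> ((u k)^2 + (v k)^2) / 2"
      by (simp add: power2_eq_square abs_mult algebra_simps)
  qed
  also have "\<dots> = (sq_norm_d d u + sq_norm_d d v) / 2"
    by (simp add: sq_norm_d_def sum.distrib sum_divide_distrib[symmetric])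
  finally show ?thesis using assms by simp
qed

locale sphctx = fixes d N :: nat assumes d1: "1 \<le> d" and N2: "2 \<le> N"
begin

abbreviation "mu \<equiv> uniform_sphere d"
abbreviation "II \<equiv> {1..N+1}"
abbreviation "P \<equiv> PiM II (\<lambda>_. mu)"

sublocale PS: product_prob_space "\<lambda>_::nat. mu" II
  unfolding product_prob_space_def product_prob_space_axioms_def product_sigma_finite_def
  using prob_mu[OF d1] prob_space_imp_sigma_finite by auto

lemma mu_prob: "prob_space mu" by (rule prob_mu[OF d1])

lemma AE_P_norm: "AE x in P. \<forall>i\<in>II. sq_norm_d d (x i) = 1"
  by (intro AE_finite_allI) (auto intro!: AE_PiM_component[where P="\<lambda>v. sq_norm_d d v = 1"] AE_mu_norm d1 mu_prob)

lemma coordP_meas[measurable]: "i \<in> II \<Longrightarrow> k < d \<Longrightarrow> (\<lambda>x. x i k) \<in> borel_measurable P"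
proof -
  assume i: "i \<in> II" and k: "k < d"
  have "(\<lambda>x. x i) \<in> measurable P mu" by (rule measurable_component_singleton) (use i in auto)
  from measurable_compose[OF this meas_comp_mu[OF k]] show ?thesis .
qed

definition T :: "((nat \<Rightarrow> real) \<Rightarrow> real) \<Rightarrow> ((nat \<Rightarrow> real) \<Rightarrow> real) \<Rightarrow> ((nat \<Rightarrow> real) \<Rightarrow> real) \<Rightarrow> (nat \<Rightarrow> nat \<Rightarrow> real) \<Rightarrow> real"
  where "T f1 f2 f3 x = f1 (x 1) * f2 (x 2) * f3 (x (N+1))"

lemma T_prod:
  assumes "integrable mu f1" "integrable mu f2" "integrable mu f3"
  shows "integrable P (T f1 f2 f3)" "integral\<^sup>L P (T f1 f2 f3) = integral\<^sup>L mu f1 * integral\<^sup>L mu f2 * integral\<^sup>L mu f3"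
proof -
  define F where "F i = (if i = 1 then f1 else if i = 2 then f2 else if i = N+1 then f3 else (\<lambda>_. 1::real))" for i
  have sub: "{1,2,N+1} \<subseteq> II" using N2 by auto
  have dist: "(1::nat) \<noteq> 2" "(1::nat) \<noteq> N+1" "(2::nat) \<noteq> N+1" using N2 by auto
  have eqT: "(\<Prod>i\<in>II. F i (x i)) = T f1 f2 f3 x" for x
  proof -
    have "(\<Prod>i\<in>II. F i (x i)) = (\<Prod>i\<in>{1,2,N+1}. F i (x i))"
      by (rule prod.mono_neutral_right) (use sub in \<open>auto simp: F_def\<close>)
    also have "\<dots> = T f1 f2 f3 x" using dist by (simp add: F_def T_def)
    finally show ?thesis .
  qed
  have eqT': "(\<lambda>x. \<Prod>i\<in>II. F i (x i)) = T f1 f2 f3" by (intro ext eqT)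
  have one: "integral\<^sup>L mu (\<lambda>_. 1::real) = 1" using prob_space.prob_space[OF mu_prob] by simp
  have intF: "integrable mu (F i)" for i
    using assms prob_space.finite_measure[OF mu_prob] by (auto simp: F_def finite_measure.integrable_const)
  have "integrable P (\<lambda>x. \<Prod>i\<in>II. F i (x i))"
    by (rule PS.product_integrable_prod) (auto intro: intF)
  thus "integrable P (T f1 f2 f3)" by (simp only: eqT')
  have "(\<integral>x. (\<Prod>i\<in>II. F i (x i)) \<partial>P) = (\<Prod>i\<in>II. integral\<^sup>L mu (F i))"
    by (rule PS.product_integral_prod) (auto intro: intF)
  also have "\<dots> = (\<Prod>i\<in>{1,2,N+1}. integral\<^sup>L mu (F i))"
    by (rule prod.mono_neutral_right) (use sub one in \<open>auto simp: F_def\<close>)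
  also have "\<dots> = integral\<^sup>L mu f1 * integral\<^sup>L mu f2 * integral\<^sup>L mu f3" using dist by (simp add: F_def)
  finally show "integral\<^sup>L P (T f1 f2 f3) = integral\<^sup>L mu f1 * integral\<^sup>L mu f2 * integral\<^sup>L mu f3"
    by (simp only: eqT')
qed


lemma mu_space1: "measure mu (space (euclid_space d)) = 1"
  using prob_space.prob_space[OF mu_prob] by simp

lemma one_int: "integrable mu (\<lambda>_. 1::real)"
  using prob_space.finite_measure[OF mu_prob] by (simp add: finite_measure.integrable_const)

lemma one_integral: "integral\<^sup>L mu (\<lambda>_. 1::real) = 1"
  using prob_space.prob_space[OF mu_prob] by simp

lemma e_int: "k < d \<Longrightarrow> integrable mu (\<lambda>v. v k)"
  by (rule integrable_bdd[OF d1 _, where B=1]) (use AE_mu_norm[OF d1] coord_bound in \<open>auto elim: AE_mp\<close>)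

lemma ekl_int: "k < d \<Longrightarrow> l < d \<Longrightarrow> integrable mu (\<lambda>v. v k * v l)"
proof (rule integrable_bdd[OF d1 _, where B=1])
  assume kl: "k < d" "l < d"
  show "(\<lambda>v. v k * v l) \<in> borel_measurable mu" using kl by measurable
  show "AE v in mu. \<bar>v k * v l\<bar> \<le> 1"
    using AE_mu_norm[OF d1]
  proof (rule AE_mp, intro AE_I2 impI)
    fix v assume "sq_norm_d d v = 1"
    hence "\<bar>v k\<bar> \<le> 1" "\<bar>v l\<bar> \<le> 1" using coord_bound kl by auto
    thus "\<bar>v k * v l\<bar> \<le> 1" by (simp add: abs_mult mult_le_one)
  qed
qed

definition m :: "nat \<Rightarrow> nat \<Rightarrow> real" where "m k l = (\<integral>v. v k * v l \<partial>mu)"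

definition X :: "nat \<Rightarrow> (nat \<Rightarrow> nat \<Rightarrow> real) \<Rightarrow> real" where
  "X i x = (\<Sum>k<d. x i k * x (N+1) k)"

definition G :: "(nat \<Rightarrow> nat \<Rightarrow> real) \<Rightarrow> real" where
  "G x = (X 1 x + X 2 x) / 2 + (X 1 x - X 2 x)^2 / 4"

abbreviation "one \<equiv> (\<lambda>_::nat\<Rightarrow>real. 1::real)"
abbreviation "e k \<equiv> (\<lambda>v::nat\<Rightarrow>real. v k)"
abbreviation "ekl k l \<equiv> (\<lambda>v::nat\<Rightarrow>real. v k * v l)"

lemma G_decomp: "G x = (\<Sum>k<d. (T (e k) one (e k) x + T one (e k) (e k) x) / 2) +
   (\<Sum>k<d. \<Sum>l<d. (T (ekl k l) one (ekl k l) x - T (e k) (e l) (ekl k l) x - T (e l) (e k) (ekl k l) x + T one (ekl k l) (ekl k l) x) / 4)"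
proof -
  define c where "c k = (x 1 k - x 2 k) * x (N+1) k" for k
  have "X 1 x - X 2 x = (\<Sum>k<d. c k)"
    by (simp add: X_def c_def sum_subtractf[symmetric] algebra_simps)
  hence sq: "(X 1 x - X 2 x)^2 = (\<Sum>k<d. \<Sum>l<d. c k * c l)"
    by (simp add: power2_eq_square sum_product)
  have "(X 1 x + X 2 x) / 2 = (\<Sum>k<d. (T (e k) one (e k) x + T one (e k) (e k) x) / 2)"
    by (simp add: X_def T_def sum.distrib sum_divide_distrib[symmetric])
  moreover have "(X 1 x - X 2 x)^2 / 4 = (\<Sum>k<d. \<Sum>l<d. (T (ekl k l) one (ekl k l) x - T (e k) (e l) (ekl k l) x - T (e l) (e k) (ekl k l) x + T one (ekl k l) (ekl k l) x) / 4)"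
    unfolding sq sum_divide_distrib
    by (intro sum.cong refl) (simp add: c_def T_def algebra_simps)
  ultimately show ?thesis by (simp add: G_def)
qed

lemma Tint:
  assumes "integrable mu f1" "integrable mu f2" "integrable mu f3"
  shows "integrable P (\<lambda>x. T f1 f2 f3 x)" "(\<integral>x. T f1 f2 f3 x \<partial>P) = integral\<^sup>L mu f1 * integral\<^sup>L mu f2 * integral\<^sup>L mu f3"
  using T_prod[OF assms] by auto

lemma G_integral: "integrable P G \<and> (\<integral>x. G x \<partial>P) = (\<Sum>k<d. \<Sum>l<d. (m k l)^2) / 2"
proof -
  have ints1: "k < d \<Longrightarrow>
    integrable P (\<lambda>x. T (e k) one (e k) x) \<and> integrable P (\<lambda>x. T one (e k) (e k) x)" for k
    by (intro conjI Tint e_int ekl_int one_int)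
  have ints: "k < d \<Longrightarrow> l < d \<Longrightarrow>
    integrable P (\<lambda>x. T (ekl k l) one (ekl k l) x) \<and> integrable P (\<lambda>x. T (e k) (e l) (ekl k l) x) \<and>
    integrable P (\<lambda>x. T (e l) (e k) (ekl k l) x) \<and> integrable P (\<lambda>x. T one (ekl k l) (ekl k l) x)" for k l
    by (intro conjI Tint e_int ekl_int one_int)
  have vals: "k < d \<Longrightarrow> l < d \<Longrightarrow>
    (\<integral>x. T (e k) one (e k) x \<partial>P) = 0 \<and> (\<integral>x. T one (e k) (e k) x \<partial>P) = 0 \<and>
    (\<integral>x. T (ekl k l) one (ekl k l) x \<partial>P) = (m k l)^2 \<and> (\<integral>x. T (e k) (e l) (ekl k l) x \<partial>P) = 0 \<and>
    (\<integral>x. T (e l) (e k) (ekl k l) x \<partial>P) = 0 \<and> (\<integral>x. T one (ekl k l) (ekl k l) x \<partial>P) = (m k l)^2" for k l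
    using T_prod(2)[OF e_int one_int e_int, of k k] T_prod(2)[OF one_int e_int e_int, of k k]
      T_prod(2)[OF ekl_int one_int ekl_int, of k l k l] T_prod(2)[OF e_int e_int ekl_int, of k l k l]
      T_prod(2)[OF e_int e_int ekl_int, of l k k l] T_prod(2)[OF one_int ekl_int ekl_int, of k l k l]
    by (simp add: mean_zero one_integral m_def power2_eq_square mu_space1)
  define H where "H k x = (T (e k) one (e k) x + T one (e k) (e k) x) / 2" for k x
  define F where "F k l x = (T (ekl k l) one (ekl k l) x - T (e k) (e l) (ekl k l) x - T (e l) (e k) (ekl k l) x + T one (ekl k l) (ekl k l) x) / 4" for k l x
  have intH: "integrable P (H k)" if "k < d" for k
  proof -
    from ints1[OF that] have a: "integrable P (T (e k) one (e k))" "integrable P (T one (e k) (e k))" by auto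
    have "integrable P (\<lambda>x. (T (e k) one (e k) x + T one (e k) (e k) x) / 2)"
      by (rule integrable_divide_zero, rule Bochner_Integration.integrable_add) (use a in auto)
    thus ?thesis by (simp add: H_def[abs_def])
  qed
  have valH: "integral\<^sup>L P (H k) = 0" if "k < d" for k
  proof -
    from ints1[OF that] have a: "integrable P (T (e k) one (e k))" "integrable P (T one (e k) (e k))" by auto
    from vals[OF that that] have b: "integral\<^sup>L P (T (e k) one (e k)) = 0" "integral\<^sup>L P (T one (e k) (e k)) = 0" by auto
    have "integral\<^sup>L P (H k) = (\<integral>x. (T (e k) one (e k) x + T one (e k) (e k) x) \<partial>P) / 2"
      by (simp add: H_def[abs_def])
    also have "(\<integral>x. (T (e k) one (e k) x + T one (e k) (e k) x) \<partial>P) = 0"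
      using a b by (subst Bochner_Integration.integral_add) auto
    finally show ?thesis by simp
  qed
  have intF: "integrable P (F k l)" if "k < d" "l < d" for k l
  proof -
    from ints[OF that] have a: "integrable P (T (ekl k l) one (ekl k l))" "integrable P (T (e k) (e l) (ekl k l))"
      "integrable P (T (e l) (e k) (ekl k l))" "integrable P (T one (ekl k l) (ekl k l))" by auto
    have "integrable P (\<lambda>x. (T (ekl k l) one (ekl k l) x - T (e k) (e l) (ekl k l) x - T (e l) (e k) (ekl k l) x + T one (ekl k l) (ekl k l) x) / 4)"
      by (intro integrable_divide_zero Bochner_Integration.integrable_add Bochner_Integration.integrable_diff) (use a in auto)
    thus ?thesis by (simp add: F_def[abs_def])
  qed
  have valF: "integral\<^sup>L P (F k l) = (m k l)^2 / 2" if "k < d" "l < d" for k l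
  proof -
    from ints[OF that] have a: "integrable P (T (ekl k l) one (ekl k l))" "integrable P (T (e k) (e l) (ekl k l))"
      "integrable P (T (e l) (e k) (ekl k l))" "integrable P (T one (ekl k l) (ekl k l))" by auto
    from vals[OF that] have b: "integral\<^sup>L P (T (ekl k l) one (ekl k l)) = (m k l)^2" "integral\<^sup>L P (T (e k) (e l) (ekl k l)) = 0"
      "integral\<^sup>L P (T (e l) (e k) (ekl k l)) = 0" "integral\<^sup>L P (T one (ekl k l) (ekl k l)) = (m k l)^2" by auto
    have "integral\<^sup>L P (F k l) = (\<integral>x. (T (ekl k l) one (ekl k l) x - T (e k) (e l) (ekl k l) x - T (e l) (e k) (ekl k l) x + T one (ekl k l) (ekl k l) x) \<partial>P) / 4"
      by (simp add: F_def[abs_def])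
    also have "(\<integral>x. (T (ekl k l) one (ekl k l) x - T (e k) (e l) (ekl k l) x - T (e l) (e k) (ekl k l) x + T one (ekl k l) (ekl k l) x) \<partial>P)
       = (\<integral>x. (T (ekl k l) one (ekl k l) x - T (e k) (e l) (ekl k l) x - T (e l) (e k) (ekl k l) x) \<partial>P) + (\<integral>x. T one (ekl k l) (ekl k l) x \<partial>P)"
      by (rule Bochner_Integration.integral_add) (use a in auto)
    also have "(\<integral>x. (T (ekl k l) one (ekl k l) x - T (e k) (e l) (ekl k l) x - T (e l) (e k) (ekl k l) x) \<partial>P)
       = (\<integral>x. (T (ekl k l) one (ekl k l) x - T (e k) (e l) (ekl k l) x) \<partial>P) - (\<integral>x. T (e l) (e k) (ekl k l) x \<partial>P)"
      by (rule Bochner_Integration.integral_diff) (use a in auto)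
    also have "(\<integral>x. (T (ekl k l) one (ekl k l) x - T (e k) (e l) (ekl k l) x) \<partial>P)
       = (\<integral>x. T (ekl k l) one (ekl k l) x \<partial>P) - (\<integral>x. T (e k) (e l) (ekl k l) x \<partial>P)"
      by (rule Bochner_Integration.integral_diff) (use a in auto)
    finally show ?thesis using b by simp
  qed
  have GG: "G = (\<lambda>x. (\<Sum>k<d. H k x) + (\<Sum>k<d. \<Sum>l<d. F k l x))"
    unfolding H_def F_def by (intro ext G_decomp)
  have i1: "integrable P (\<lambda>x. \<Sum>k<d. H k x)"
    by (rule Bochner_Integration.integrable_sum) (use intH in auto)
  have i2: "integrable P (\<lambda>x. \<Sum>l<d. F k l x)" if "k < d" for k
    by (rule Bochner_Integration.integrable_sum) (use intF that in auto)
  have i3: "integrable P (\<lambda>x. \<Sum>k<d. \<Sum>l<d. F k l x)"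
    by (rule Bochner_Integration.integrable_sum) (use i2 in auto)
  have "integrable P G" unfolding GG using i1 i3 by (rule Bochner_Integration.integrable_add)
  moreover have "(\<integral>x. G x \<partial>P) = (\<Sum>k<d. \<Sum>l<d. (m k l)^2) / 2"
  proof -
    have "(\<integral>x. G x \<partial>P) = (\<integral>x. (\<Sum>k<d. H k x) \<partial>P) + (\<integral>x. (\<Sum>k<d. \<Sum>l<d. F k l x) \<partial>P)"
      unfolding GG using i1 i3 by (rule Bochner_Integration.integral_add)
    also have "(\<integral>x. (\<Sum>k<d. H k x) \<partial>P) = (\<Sum>k<d. integral\<^sup>L P (H k))"
      by (rule Bochner_Integration.integral_sum) (use intH in auto)
    also have "\<dots> = 0" using valH by simp
    also have "(\<integral>x. (\<Sum>k<d. \<Sum>l<d. F k l x) \<partial>P) = (\<Sum>k<d. (\<integral>x. (\<Sum>l<d. F k l x) \<partial>P))"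
      by (rule Bochner_Integration.integral_sum) (use i2 in auto)
    also have "\<dots> = (\<Sum>k<d. \<Sum>l<d. integral\<^sup>L P (F k l))"
    proof (rule sum.cong[OF refl])
      fix k assume "k \<in> {..<d}"
      thus "(\<integral>x. (\<Sum>l<d. F k l x) \<partial>P) = (\<Sum>l<d. integral\<^sup>L P (F k l))"
        by (intro Bochner_Integration.integral_sum) (use intF in auto)
    qed
    also have "\<dots> = (\<Sum>k<d. \<Sum>l<d. (m k l)^2 / 2)"
    proof (intro sum.cong refl)
      fix k l assume "k \<in> {..<d}" "l \<in> {..<d}"
      thus "integral\<^sup>L P (F k l) = (m k l)^2 / 2" by (intro valF) auto
    qed
    finally show ?thesis by (simp add: sum_divide_distrib)
  qed
  ultimately show ?thesis by blast
qed


lemma max_bound_aux: "a \<le> b \<Longrightarrow> b - a \<le> 2 \<Longrightarrow> (a + b) / 2 + (a - b)^2 / 4 \<le> (b::real)"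
proof -
  assume h: "a \<le> b" "b - a \<le> 2"
  define q where "q = (b - a) * (b - a)"
  have "q \<le> 2 * (b - a)" unfolding q_def by (rule mult_right_mono) (use h in auto)
  hence "(a + b) / 2 + q / 4 \<le> b" by (simp add: field_simps)
  moreover have "(a - b)^2 = q" unfolding q_def by (simp add: power2_eq_square algebra_simps)
  ultimately show ?thesis by simp
qed

lemma max_bound: "\<bar>a\<bar> \<le> 1 \<Longrightarrow> \<bar>b::real\<bar> \<le> 1 \<Longrightarrow> (a + b) / 2 + (a - b)^2 / 4 \<le> max a b"
proof -
  assume h: "\<bar>a\<bar> \<le> 1" "\<bar>b\<bar> \<le> 1"
  show ?thesis
  proof (cases "a \<le> b")
    case True
    thus ?thesis using max_bound_aux[of a b] h by (simp add: max_def)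
  next
    case False
    thus ?thesis using max_bound_aux[of b a] h by (simp add: max_def add.commute power2_commute)
  qed
qed

abbreviation "fM x \<equiv> Max ((\<lambda>i. \<Sum>k<d. x i k * x (N + 1) k) ` {1..N})"

lemma fM_meas: "(\<lambda>x. fM x) \<in> borel_measurable P"
proof (rule borel_measurable_Max)
  fix i assume i: "i \<in> {1..N}"
  show "(\<lambda>x. \<Sum>k<d. x i k * x (N + 1) k) \<in> borel_measurable P"
    by (intro borel_measurable_sum borel_measurable_times coordP_meas) (use i in auto)
qed simp

lemma X_bound_AE: "AE x in P. \<forall>i\<in>{1..N}. \<bar>X i x\<bar> \<le> 1"
  using AE_P_norm
proof (rule AE_mp, intro AE_I2 impI ballI)
  fix x i assume h: "\<forall>i\<in>II. sq_norm_d d (x i) = 1" and i: "i \<in> {1..N}"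
  show "\<bar>X i x\<bar> \<le> 1" unfolding X_def using h i by (intro inner_bound) auto
qed

lemma fM_bound: "\<forall>i\<in>{1..N}. \<bar>X i x\<bar> \<le> 1 \<Longrightarrow> \<bar>fM x\<bar> \<le> 1 \<and> G x \<le> fM x"
proof -
  assume h: "\<forall>i\<in>{1..N}. \<bar>X i x\<bar> \<le> 1"
  have ne: "(\<lambda>i. \<Sum>k<d. x i k * x (N + 1) k) ` {1..N} \<noteq> {}" using N2 by auto
  have "fM x \<in> (\<lambda>i. \<Sum>k<d. x i k * x (N + 1) k) ` {1..N}" by (rule Max_in) (use ne in auto)
  then obtain j where j: "j \<in> {1..N}" "fM x = X j x" by (auto simp: X_def)
  have 1: "X 1 x \<le> fM x" "X 2 x \<le> fM x" using N2 by (auto simp: X_def intro!: Max_ge)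
  have "G x \<le> max (X 1 x) (X 2 x)" unfolding G_def
    by (rule max_bound) (use h N2 in auto)
  also have "\<dots> \<le> fM x" using 1 by simp
  finally show ?thesis using h j by auto
qed

lemma fM_int: "integrable P (\<lambda>x. fM x)"
  by (rule PS.integrable_const_bound[where B=1]) (use X_bound_AE fM_bound fM_meas in \<open>auto elim: AE_mp\<close>)

lemma trace_one: "(\<Sum>k<d. m k k) = 1"
proof -
  have "(\<Sum>k<d. m k k) = (\<integral>v. (\<Sum>k<d. v k * v k) \<partial>mu)"
    unfolding m_def by (rule Bochner_Integration.integral_sum[symmetric]) (use ekl_int in auto)
  also have "\<dots> = (\<integral>v. 1 \<partial>mu)"
  proof (rule integral_cong_AE)
    show "(\<lambda>v. \<Sum>k<d. v k * v k) \<in> borel_measurable mu"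
      by (intro borel_measurable_sum borel_measurable_times meas_comp_mu) auto
    show "AE v in mu. (\<Sum>k<d. v k * v k) = 1"
      using AE_mu_norm[OF d1] by (rule AE_mp) (auto simp: sq_norm_d_def power2_eq_square)
  qed simp
  also have "\<dots> = 1" by (rule one_integral)
  finally show ?thesis .
qed

lemma main_loc: "(\<integral>x. fM x \<partial>P) \<ge> 1 / (2 * real d)"
proof -
  have GI: "integrable P G" "(\<integral>x. G x \<partial>P) = (\<Sum>k<d. \<Sum>l<d. (m k l)^2) / 2"
    using G_integral by auto
  have "(\<integral>x. G x \<partial>P) \<le> (\<integral>x. fM x \<partial>P)"
    by (rule integral_mono_AE[OF GI(1) fM_int]) (use X_bound_AE fM_bound in \<open>auto elim: AE_mp\<close>)
  moreover have "(\<Sum>k<d. (m k k)^2) \<le> (\<Sum>k<d. \<Sum>l<d. (m k l)^2)"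
    by (intro sum_mono member_le_sum) auto
  moreover have "1 \<le> real d * (\<Sum>k<d. (m k k)^2)"
  proof -
    have "(\<Sum>k<d. m k k * 1)^2 \<le> (\<Sum>k<d. (m k k)^2) * (\<Sum>k<d. (1::real)^2)"
      by (rule Cauchy_Schwarz_ineq_sum)
    thus ?thesis using trace_one by (simp add: mult.commute)
  qed
  ultimately have "1 \<le> real d * (\<Sum>k<d. (m k k)^2)" "(\<Sum>k<d. (m k k)^2) \<le> 2 * (\<integral>x. fM x \<partial>P)"
    using GI(2) by linarith+
  hence "1 \<le> real d * (2 * (\<integral>x. fM x \<partial>P))"
    by (meson mult_left_mono of_nat_0_le_iff order_trans)
  thus ?thesis using d1 by (simp add: field_simps)
qed

end


theorem lemma18:
  shows "\<exists>c::real > 0. \<forall>(d::nat) (N::nat).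
           d \<ge> 2 \<and> real N \<ge> c * sqrt (real d) * ln (real d) \<longrightarrow>
           (\<integral>x. Max ((\<lambda>i. \<Sum>k<d. x i k * x (N + 1) k) ` {1..N})
              \<partial>(PiM {1..N+1} (\<lambda>_. uniform_sphere d)))
             \<ge> 2 / (real N + 1)^2"
proof (intro exI[of _ 4] conjI allI impI)
  fix d N :: nat
  assume h: "d \<ge> 2 \<and> real N \<ge> 4 * sqrt (real d) * ln (real d)"
  have d2: "d \<ge> 2" using h by auto
  have "ln (real d) \<ge> ln 2" using d2 by simp
  hence ln: "ln (real d) \<ge> 1/2" using ln2_ge_two_thirds by linarith
  have sq: "sqrt (real d) \<ge> 0" by simp
  have "4 * sqrt (real d) * ln (real d) \<ge> 4 * sqrt (real d) * (1/2)"
    using ln sq by (intro mult_left_mono) auto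
  hence Nge: "real N \<ge> 2 * sqrt (real d)" using h by linarith
  have "sqrt (real d) \<ge> sqrt 2" using d2 by simp
  moreover have "sqrt (2::real) > 1" by simp
  ultimately have "real N > 2" using Nge by linarith
  hence N2: "N \<ge> 2" by simp
  interpret sphctx d N using d2 N2 by unfold_locales auto
  have "(real N)^2 \<ge> (2 * sqrt (real d))^2"
    using Nge by (intro power_mono) auto
  hence "(real N)^2 \<ge> 4 * real d" by (simp add: power_mult_distrib)
  moreover have "(real N + 1)^2 \<ge> (real N)^2" by (intro power_mono) auto
  ultimately have NN: "(real N + 1)^2 \<ge> 4 * real d" by linarith
  have "2 / (real N + 1)^2 \<le> 2 / (4 * real d)"
    using NN d2 by (intro divide_left_mono) auto
  also have "\<dots> = 1 / (2 * real d)" by simp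
  also have "\<dots> \<le> (\<integral>x. fM x \<partial>P)" by (rule main_loc)
  finally show "(\<integral>x. Max ((\<lambda>i. \<Sum>k<d. x i k * x (N + 1) k) ` {1..N})
              \<partial>(PiM {1..N+1} (\<lambda>_. uniform_sphere d))) \<ge> 2 / (real N + 1)^2" .
qed simp

end
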